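(* Let $m$ be a non-negative integer. Then there is at most one tuple of complex numbers $(c_0,c_2,c_4,\dots,c_{2m})$ such that, identically as meromorphic functions of $s\in\mathbb{C}$, $$\zeta(-2m-1,s+2m+1)+c_{2m}\zeta(-2m,s+2m)+c_{2m-2}\zeta(-2m+2,s+2m-2)+\cdots+c_2\zeta(-2,s+2)+c_0\,\zeta(0,s)/2\equiv0;$$ that is, if such coefficients exist, they are uniquely determined.
   Context: For an integer $c\ge 0$, $\zeta(-c,s+c)$ denotes the Euler–Zagier double zeta function $\zeta(s_1,s_2)=\sum_{1\le n_1<n_2} n_1^{-s_1}n_2^{-s_2}$ evaluated at $(s_1,s_2)=(-c,s+c)$; i.e. it is the meromorphic continuation to all $s\in\mathbb{C}$ of the series $\sum_{m,n\ge1} m^{c}(m+n)^{-s-c}$, which converges absolutely for $\Re(s)>2$. *)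

theory Defs
  imports "HOL-Complex_Analysis.Complex_Analysis"
begin

text \<open>The defining series of the Euler--Zagier double zeta function at
  (s1,s2) = (-c, s+c):  sum over m,n >= 1 of m^c (m+n)^(-s-c).
  It converges absolutely for Re s > 2.\<close>
definition dz_series :: "nat \<Rightarrow> complex \<Rightarrow> complex" where
  "dz_series c s =
     infsum (\<lambda>(a::nat, b::nat). (of_nat a) ^ c * (of_nat (a + b)) powr (- s - of_nat c))
            ({1..} \<times> {1..})"

definition is_dz_continuation :: "nat \<Rightarrow> (complex \<Rightarrow> complex) \<Rightarrow> bool" where
  "is_dz_continuation c F \<longleftrightarrow>
     F meromorphic_on UNIV \<and> (\<forall>s. 2 < Re s \<longrightarrow> F s = dz_series c s)"

definition dz_comb :: "nat \<Rightarrow> (nat \<Rightarrow> complex) \<Rightarrow> (nat \<Rightarrow> complex \<Rightarrow> complex) \<Rightarrow> complex \<Rightarrow> complex" where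
  "dz_comb m coef F s =
     F (2*m+1) s + (\<Sum>j=1..m. coef (2*j) * F (2*j) s) + coef 0 * F 0 s / 2"

end

theory Submission
  imports Defs "HOL-Computational_Algebra.Polynomial"
begin


lemma even_part_sum:
  fixes g :: "nat \<Rightarrow> 'a::comm_monoid_add"
  shows "(\<Sum>i\<le>2*k+1. if even i then g i else 0) = (\<Sum>j\<le>k. g (2*j))"
proof (induction k)
  case 0
  then show ?case by (simp add: atMost_Suc)
next
  case (Suc k)
  have e: "2 * Suc k + 1 = Suc (Suc (2*k+1))" by simp
  show ?case unfolding e sum.atMost_Suc Suc.IH by simp
qed

lemma diff_pow_odd:
  fixes x :: complex
  shows "(x+1)^(2*k+1) - (x-1)^(2*k+1) = 2 * (\<Sum>j\<le>k. of_nat ((2*k+1) choose (2*j)) * x^(2*j))"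
proof -
  let ?n = "2*k+1"
  have a: "(x+1)^?n = (\<Sum>i\<le>?n. of_nat (?n choose i) * x^i)"
    by (subst binomial_ring) simp
  have b: "(x-1)^?n = (\<Sum>i\<le>?n. of_nat (?n choose i) * x^i * (-1)^(?n-i))"
    using binomial_ring[of x "-1" ?n] by simp
  have "(x+1)^?n - (x-1)^?n = (\<Sum>i\<le>?n. if even i then 2 * (of_nat (?n choose i) * x^i) else 0)"
    unfolding a b sum_subtractf[symmetric]
  proof (intro sum.cong refl)
    fix i assume i: "i \<in> {..?n}"
    show "of_nat (?n choose i) * x ^ i - of_nat (?n choose i) * x ^ i * (- 1) ^ (?n - i) =
          (if even i then 2 * (of_nat (?n choose i) * x ^ i) else 0)"
    proof (cases "even i")
      case True
      then have "odd (?n - i)" using i by auto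
      then show ?thesis using True by simp
    next
      case False
      then have "even (?n - i)" using i by auto
      then show ?thesis using False by simp
    qed
  qed
  also have "\<dots> = (\<Sum>j\<le>k. 2 * (of_nat (?n choose (2*j)) * x^(2*j)))"
    by (rule even_part_sum)
  finally show ?thesis by (simp add: sum_distrib_left)
qed

function Epol :: "nat \<Rightarrow> complex poly" where
  "Epol k = smult (1 / (2 * (2 * of_nat k + 1)))
     ([:0,1:]^(2*k+1) + [:-1,1:]^(2*k+1) + 1
      - smult 2 (\<Sum>j<k. smult (of_nat ((2*k+1) choose (2*j))) (Epol j)))"
  by auto
termination by (relation "Wellfounded.measure id") auto

declare Epol.simps[simp del]

lemma telescope_id:
  fixes N :: nat
  shows "2 * (\<Sum>j\<le>k. of_nat ((2*k+1) choose (2*j)) * (\<Sum>a<N. (of_nat a :: complex)^(2*j)))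
     = (of_nat N)^(2*k+1) + (of_nat N - 1)^(2*k+1) + 1"
proof (induction N)
  case 0
  then show ?case by simp
next
  case (Suc N)
  have "2 * (\<Sum>j\<le>k. of_nat ((2*k+1) choose (2*j)) * (\<Sum>a<Suc N. (of_nat a :: complex)^(2*j)))
     = 2 * (\<Sum>j\<le>k. of_nat ((2*k+1) choose (2*j)) * (\<Sum>a<N. (of_nat a :: complex)^(2*j)))
       + 2 * (\<Sum>j\<le>k. of_nat ((2*k+1) choose (2*j)) * (of_nat N :: complex)^(2*j))"
    by (simp add: distrib_left sum.distrib)
  also have "\<dots> = (of_nat N)^(2*k+1) + (of_nat N - 1)^(2*k+1) + 1 
       + ((of_nat N + 1)^(2*k+1) - (of_nat N - 1)^(2*k+1))"
    unfolding Suc.IH diff_pow_odd by simp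
  also have "\<dots> = (of_nat (Suc N))^(2*k+1) + (of_nat (Suc N) - 1)^(2*k+1) + 1"
    by (simp add: add.commute)
  finally show ?case .
qed

lemma Epol_val: "poly (Epol k) (of_nat N) = (\<Sum>a<N. (of_nat a :: complex)^(2*k))"
proof (induction k rule: less_induct)
  case (less k)
  define S where "S j = (\<Sum>a<N. (of_nat a :: complex)^(2*j))" for j
  have tid: "2 * (\<Sum>j\<le>k. of_nat ((2*k+1) choose (2*j)) * S j) = (of_nat N)^(2*k+1) + (of_nat N - 1)^(2*k+1) + 1"
    unfolding S_def by (rule telescope_id)
  have split: "(\<Sum>j\<le>k. of_nat ((2*k+1) choose (2*j)) * S j)
      = (\<Sum>j<k. of_nat ((2*k+1) choose (2*j)) * S j) + of_nat (2*k+1) * S k"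
    by (simp add: lessThan_Suc_atMost[symmetric])
  have ih: "(\<Sum>j<k. of_nat ((2*k+1) choose (2*j)) * poly (Epol j) (of_nat N))
      = (\<Sum>j<k. of_nat ((2*k+1) choose (2*j)) * S j)"
    using less.IH unfolding S_def by (intro sum.cong) auto
  have "poly (Epol k) (of_nat N) = ((of_nat N)^(2*k+1) + (of_nat N - 1)^(2*k+1) + 1
        - 2 * (\<Sum>j<k. of_nat ((2*k+1) choose (2*j)) * S j)) / (2 * (2 * of_nat k + 1))"
    apply (subst Epol.simps)
    apply (simp add: poly_sum ih[symmetric] field_simps)
    apply (rule disjI2, intro sum.cong refl)
    by (simp add: less.IH S_def)
  also have "\<dots> = S k"
  proof -
    have nz: "(2 * (2 * of_nat k + 1) :: complex) \<noteq> 0"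
    proof -
      have "(2 * (2 * of_nat k + 1) :: complex) = of_nat (4*k+2)" by simp
      then show ?thesis by (metis of_nat_eq_0_iff add_eq_0_iff_both_eq_0 zero_neq_numeral)
    qed
    have "(of_nat N)^(2*k+1) + (of_nat N - 1)^(2*k+1) + 1
        - 2 * (\<Sum>j<k. of_nat ((2*k+1) choose (2*j)) * S j) = (2 * (2 * of_nat k + 1)) * S k"
      unfolding tid[symmetric] split by (simp add: algebra_simps)
    then show ?thesis using nz by simp
  qed
  finally show ?case unfolding S_def .
qed


lemma coeff1_pderiv: "coeff p 1 = poly (pderiv p) (0::complex)"
  by (simp add: poly_0_coeff_0 coeff_pderiv)

definition beta :: "nat \<Rightarrow> complex" where "beta k = coeff (Epol k) 1"

lemma beta_rec_raw: "2 * (2 * of_nat k + 1) * beta k =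
   (if k = 0 then 1 else 0) + (2 * of_nat k + 1) - 2 * (\<Sum>j<k. of_nat ((2*k+1) choose (2*j)) * beta j)"
proof -
  have nz: "(2 * (2 * of_nat k + 1) :: complex) \<noteq> 0"
  proof -
    have "(2 * (2 * of_nat k + 1) :: complex) = of_nat (4*k+2)" by simp
    then show ?thesis by (metis of_nat_eq_0_iff add_eq_0_iff_both_eq_0 zero_neq_numeral)
  qed
  have a: "coeff ([:0,1:]^(2*k+1) :: complex poly) 1 = (if k = 0 then 1 else 0)"
    unfolding coeff1_pderiv Suc_eq_plus1[symmetric] pderiv_power_Suc by (simp add: pderiv_pCons poly_pCons)
  have b: "coeff ([:-1,1:]^(2*k+1) :: complex poly) 1 = 2 * of_nat k + 1"
    unfolding coeff1_pderiv Suc_eq_plus1[symmetric] pderiv_power_Suc by (simp add: pderiv_pCons poly_pCons)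
  have "beta k = (1 / (2 * (2 * of_nat k + 1))) * ((if k = 0 then 1 else 0) + (2 * of_nat k + 1) 
      - 2 * (\<Sum>j<k. of_nat ((2*k+1) choose (2*j)) * beta j))"
    unfolding beta_def
    apply (subst Epol.simps)
    by (simp only: coeff_smult coeff_add coeff_diff coeff_sum a b) simp
  then show ?thesis using nz by (simp add: field_simps)
qed

lemma beta0: "beta 0 = 1"
  using beta_rec_raw[of 0] by simp

lemma beta_rec: assumes "k \<ge> 1"
  shows "2 * (\<Sum>j\<le>k. of_nat ((2*k+1) choose (2*j)) * beta j) = 2 * of_nat k + 1"
proof -
  have "(\<Sum>j\<le>k. of_nat ((2*k+1) choose (2*j)) * beta j) 
      = (\<Sum>j<k. of_nat ((2*k+1) choose (2*j)) * beta j) + (2 * of_nat k + 1) * beta k"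
    by (simp add: lessThan_Suc_atMost[symmetric])
  then show ?thesis using beta_rec_raw[of k] assms by (simp add: algebra_simps)
qed

lemma Epol_coeff0: "coeff (Epol k) 0 = 0"
  using Epol_val[of k 0] by (simp add: poly_0_coeff_0)


lemma sum_head0: "sum f {..k} = f 0 + sum f {1..(k::nat)}"
  by (simp add: atMost_atLeast0 sum.atLeast_Suc_atMost)

lemma binom_even_mid: "even (\<Sum>j\<in>{1..k}. ((2*Suc k+1) choose (2*j)))"
proof -
  let ?n = "2*Suc k+1"
  have "2 * (\<Sum>i\<le>?n. if even i then int (?n choose i) else 0) = 2 ^ ?n"
    by (rule choose_even_sum) simp
  then have "(\<Sum>i\<le>?n. if even i then int (?n choose i) else 0) = 2 ^ (2*Suc k)" by simp
  then have A: "(\<Sum>j\<le>Suc k. int (?n choose (2*j))) = 2 ^ (2*Suc k)"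
    by (subst (asm) even_part_sum) 
  have "(\<Sum>j\<le>Suc k. int (?n choose (2*j))) = 1 + (\<Sum>j\<in>{1..k}. int (?n choose (2*j))) + int ?n"
    unfolding sum.atMost_Suc sum_head0 by simp
  with A have "(\<Sum>j\<in>{1..k}. int (?n choose (2*j))) = 2 ^ (2*Suc k) - 2 * int k - 4" by simp
  then have "even (\<Sum>j\<in>{1..k}. int (?n choose (2*j)))" by simp
  then show ?thesis by (simp flip: of_nat_sum)
qed

lemma beta_odd: "\<forall>j\<in>{1..k}. \<exists>n::int. odd n \<and> of_int (\<Prod>i=1..k. 2*int i+1) * (2 * beta j) = of_int n"
proof (induction k)
  case 0
  then show ?case by simp
next
  case (Suc k)
  define L where "L = (\<Prod>i=1..k. 2*int i+1)"
  have Lodd: "odd L" unfolding L_def by (induction k) auto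
  have L': "(\<Prod>i=1..Suc k. 2*int i+1) = L * (2*int k + 3)"
    unfolding L_def by (simp add: prod.nat_ivl_Suc' algebra_simps)
  obtain nf where nf: "\<forall>j\<in>{1..k}. odd (nf j) \<and> of_int L * (2 * beta j) = of_int (nf j)"
    using bchoice[OF Suc.IH] unfolding L_def by blast
  let ?K = "Suc k"
  let ?b = "\<lambda>j. ((2*?K+1) choose (2*j))"
  have rec: "2 * (\<Sum>j\<le>?K. of_nat (?b j) * beta j) = 2 * of_nat ?K + 1"
    by (rule beta_rec) simp
  have spl: "(\<Sum>j\<le>?K. of_nat (?b j) * beta j) = 1 + (\<Sum>j\<in>{1..k}. of_nat (?b j) * beta j) 
        + (2 * of_nat ?K + 1) * beta ?K"
    unfolding sum.atMost_Suc sum_head0 by (simp add: beta0)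
  define S where "S = (\<Sum>j\<in>{1..k}. of_nat (?b j) * beta j)"
  have r0: "(2 * of_nat ?K + 1) * (2 * beta ?K) - ((2 * of_nat ?K - 1) - 2 * S)
      = 2 * (1 + S + (2 * of_nat ?K + 1) * beta ?K) - (2 * of_nat ?K + 1)"
    by (simp add: algebra_simps)
  have r1: "(2 * of_nat ?K + 1) * (2 * beta ?K) = (2 * of_nat ?K - 1) - 2 * S"
  proof -
    have rec': "2 * (1 + S + (2 * of_nat ?K + 1) * beta ?K) = 2 * of_nat ?K + 1"
      using rec unfolding spl S_def .
    have "(2 * of_nat ?K + 1) * (2 * beta ?K) - ((2 * of_nat ?K - 1) - 2 * S) = 0"
      unfolding r0 rec' by simp
    then show ?thesis by (simp only: right_minus_eq)
  qed
  have LS: "of_int L * (2 * S) = (\<Sum>j\<in>{1..k}. of_nat (?b j) * (of_int L * (2 * beta j)))"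
    unfolding S_def sum_distrib_left by (simp add: algebra_simps)
  have key: "of_int L * (2 * of_nat ?K + 1) * (2 * beta ?K) 
     = of_int L * (2 * of_nat ?K - 1) - (\<Sum>j\<in>{1..k}. of_nat (?b j) * (of_int L * (2 * beta j)))"
    unfolding LS[symmetric] using arg_cong[OF r1, of "\<lambda>x. of_int L * x"] by (simp add: algebra_simps)
  also have "\<dots> = of_int (L * (2 * int ?K - 1) - (\<Sum>j\<in>{1..k}. int (?b j) * nf j))"
    using nf by simp
  finally have key2: "of_int (L * (2*int k + 3)) * (2 * beta ?K) = (of_int (L * (2 * int ?K - 1) - (\<Sum>j\<in>{1..k}. int (?b j) * nf j)) :: complex)"
    by (simp add: algebra_simps)
  have ev1: "even (\<Sum>j\<in>{1..k}. int (?b j) * (nf j - 1))"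
    using nf by (intro dvd_sum) auto
  have ev2: "even (\<Sum>j\<in>{1..k}. int (?b j))"
    using binom_even_mid[of k] by (simp flip: of_nat_sum)
  have "(\<Sum>j\<in>{1..k}. int (?b j) * nf j) = (\<Sum>j\<in>{1..k}. int (?b j) * (nf j - 1)) + (\<Sum>j\<in>{1..k}. int (?b j))"
    unfolding sum.distrib[symmetric] by (intro sum.cong) (auto simp: algebra_simps)
  then have ev: "even (\<Sum>j\<in>{1..k}. int (?b j) * nf j)" using ev1 ev2 by simp
  have oddn: "odd (L * (2 * int ?K - 1) - (\<Sum>j\<in>{1..k}. int (?b j) * nf j))"
    using Lodd ev by simp
  show ?case
  proof
    fix j assume j: "j \<in> {1..Suc k}"
    show "\<exists>n. odd n \<and> of_int (\<Prod>i = 1..Suc k. 2 * int i + 1) * (2 * beta j) = of_int n"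
    proof (cases "j = Suc k")
      case True
      then show ?thesis using key2 oddn unfolding L' by blast
    next
      case False
      then have jk: "j \<in> {1..k}" using j by auto
      have "of_int (L * (2*int k + 3)) * (2 * beta j) = (of_int (nf j * (2*int k + 3)) :: complex)"
      proof -
        have e: "of_int L * (2 * beta j) = (of_int (nf j) :: complex)" using nf jk by blast
        have "of_int (L * (2*int k + 3)) * (2 * beta j) = (of_int L * (2 * beta j)) * (of_int (2*int k + 3) :: complex)"
          by (simp add: algebra_simps)
        then show ?thesis unfolding e by simp
      qed
      moreover have "odd (nf j * (2*int k + 3))" using nf jk by simp
      ultimately show ?thesis unfolding L' by blast
    qed
  qed
qed

lemma beta_nz: "beta k \<noteq> 0"
proof (cases "k = 0")
  case True then show ?thesis by (simp add: beta0)
next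
  case False
  then obtain n :: int where "odd n" "of_int (\<Prod>i=1..k. 2*int i+1) * (2 * beta k) = (of_int n :: complex)"
  proof -
    have "k \<in> {1..k}" using False by simp
    then show ?thesis using beta_odd[of k] that by blast
  qed
  moreover have "n \<noteq> 0" using \<open>odd n\<close> by auto
  ultimately show ?thesis by auto
qed


lemma poly_zero_inf_nat:
  fixes V :: "complex poly"
  assumes "\<And>N. N \<ge> 2 \<Longrightarrow> poly V (of_nat N) = 0"
  shows "V = 0"
proof (rule ccontr)
  assume "V \<noteq> 0"
  then have fin: "finite {x. poly V x = 0}" by (rule poly_roots_finite)
  have "of_nat ` {2..} \<subseteq> {x. poly V x = 0}" using assms by auto
  then have "finite (of_nat ` {2..} :: complex set)" using fin finite_subset by blast
  moreover have "inj_on (of_nat :: nat \<Rightarrow> complex) {2..}" by (auto simp: inj_on_def)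
  ultimately have "finite ({2..} :: nat set)" using finite_imageD by blast
  then show False using infinite_Ici by blast
qed

lemma Gzero:
  fixes d :: "nat \<Rightarrow> complex"
  assumes "\<And>N. N \<ge> 2 \<Longrightarrow> (\<Sum>a\<in>{1..<N}. \<Sum>j\<le>m. d j * (of_nat a / of_nat N)^(2*j)) = 0"
  shows "\<forall>j\<le>m. d j = 0"
  using assms
proof (induction m)
  case 0
  from 0[of 2] show ?case by simp
next
  case (Suc m)
  let ?M = "Suc m"
  define V where "V = (\<Sum>j\<le>?M. smult (d j) (monom 1 (2*?M-2*j) * Epol j)) - monom (d 0) (2*?M)"
  have "poly V (of_nat N) = 0" if N: "N \<ge> 2" for N
  proof -
    have N0: "(of_nat N :: complex) \<noteq> 0" using N by simp
    have t: "of_nat N ^ (2*?M-2*j) * (\<Sum>a<N. (of_nat a :: complex)^(2*j)) 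
        = of_nat N ^ (2*?M) * (\<Sum>a<N. (of_nat a / of_nat N)^(2*j))" if "j \<le> ?M" for j
    proof -
      have "(of_nat N :: complex) ^ (2*?M) = of_nat N ^ (2*?M-2*j) * of_nat N ^ (2*j)"
        using that by (simp flip: power_add)
      then show ?thesis using N0 by (simp add: sum_distrib_left power_divide)
    qed
    have "poly V (of_nat N) = (\<Sum>j\<le>?M. d j * (of_nat N ^ (2*?M-2*j) * (\<Sum>a<N. (of_nat a :: complex)^(2*j)))) - d 0 * of_nat N ^ (2*?M)"
      unfolding V_def by (simp add: poly_sum poly_monom Epol_val)
    also have "\<dots> = (\<Sum>j\<le>?M. d j * (of_nat N ^ (2*?M) * (\<Sum>a<N. (of_nat a / of_nat N)^(2*j)))) - d 0 * of_nat N ^ (2*?M)"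
      using t by (intro arg_cong2[where f="(-)"] sum.cong refl) auto
    also have "\<dots> = of_nat N ^ (2*?M) * ((\<Sum>a<N. \<Sum>j\<le>?M. d j * (of_nat a / of_nat N)^(2*j)) - d 0)"
      by (simp add: sum_distrib_left right_diff_distrib sum.swap[of _ "{..<N}"] algebra_simps)
    also have "(\<Sum>a<N. \<Sum>j\<le>?M. d j * (of_nat a / of_nat N)^(2*j)) 
        = d 0 + (\<Sum>a\<in>{1..<N}. \<Sum>j\<le>?M. d j * (of_nat a / of_nat N)^(2*j))"
    proof -
      have "{..<N} = insert 0 {1..<N}" using N by auto
      moreover have "(\<Sum>j\<le>?M. d j * (of_nat 0 / of_nat N)^(2*j)) = d 0"
        by (simp add: sum_head0, intro sum.neutral) auto
      ultimately show ?thesis by simp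
    qed
    also have "(\<Sum>a\<in>{1..<N}. \<Sum>j\<le>?M. d j * (of_nat a / of_nat N)^(2*j)) = 0"
      using Suc.prems N by blast
    finally show ?thesis by simp
  qed
  then have V0: "V = 0" by (rule poly_zero_inf_nat)
  have "coeff V 1 = d ?M * beta ?M"
  proof -
    have "coeff V 1 = (\<Sum>j\<le>?M. d j * coeff (monom 1 (2*?M-2*j) * Epol j) 1)"
      unfolding V_def by (simp add: coeff_sum coeff_monom)
    also have "\<dots> = (\<Sum>j\<le>m. d j * coeff (monom 1 (2*?M-2*j) * Epol j) 1) + d ?M * beta ?M"
      by (simp add: beta_def)
    also have "(\<Sum>j\<le>m. d j * coeff (monom 1 (2*?M-2*j) * Epol j) 1) = 0"
      by (intro sum.neutral) (auto simp: coeff_monom_mult)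
    finally show ?thesis by simp
  qed
  then have dM: "d ?M = 0" using V0 beta_nz[of ?M] by simp
  have "\<forall>j\<le>m. d j = 0"
  proof (rule Suc.IH)
    fix N :: nat assume N: "N \<ge> 2"
    have "(\<Sum>a\<in>{1..<N}. \<Sum>j\<le>?M. d j * (of_nat a / of_nat N)^(2*j)) = 0" using Suc.prems N by blast
    then show "(\<Sum>a\<in>{1..<N}. \<Sum>j\<le>m. d j * (of_nat a / of_nat N)^(2*j)) = 0"
      using dM by simp
  qed
  then show ?case using dM by (auto simp: le_Suc_eq)
qed



lemma infsum_finsum:
  fixes f :: "nat \<Rightarrow> 'a \<Rightarrow> complex"
  assumes "\<And>j. j \<le> m \<Longrightarrow> f j summable_on A"
  shows "(\<lambda>x. \<Sum>j\<le>m. f j x) summable_on A \<and> infsum (\<lambda>x. \<Sum>j\<le>m. f j x) A = (\<Sum>j\<le>m. infsum (f j) A)"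
  using assms
proof (induction m)
  case 0
  then show ?case by simp
next
  case (Suc m)
  then have ih: "(\<lambda>x. \<Sum>j\<le>m. f j x) summable_on A \<and> infsum (\<lambda>x. \<Sum>j\<le>m. f j x) A = (\<Sum>j\<le>m. infsum (f j) A)"
    by simp
  have fs: "f (Suc m) summable_on A" using Suc.prems by simp
  show ?case
    unfolding sum.atMost_Suc
    using summable_on_add[OF ih[THEN conjunct1] fs] infsum_add[OF ih[THEN conjunct1] fs] ih by simp
qed

definition k4 :: "nat \<times> nat \<Rightarrow> real" where
  "k4 x = inverse (real (fst x) ^ 2) * inverse (real (snd x) ^ 2)"

lemma q_summable: "(\<lambda>n::nat. inverse (real n ^ 2)) summable_on {1..}"
proof -
  have "summable (\<lambda>n::nat. inverse (real n ^ 2))" by (rule inverse_power_summable) simp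
  then have "(\<lambda>n::nat. inverse (real n ^ 2)) summable_on UNIV"
    by (subst summable_on_UNIV_nonneg_real_iff) auto
  then show ?thesis by (rule summable_on_subset) simp
qed

lemma k4_summable: "k4 summable_on ({1..} \<times> {1..})"
proof -
  let ?q = "\<lambda>n::nat. inverse (real n ^ 2)"
  have c1: "\<forall>a\<in>{1..}. (\<lambda>b. norm (k4 (a, b))) summable_on {1..}"
    unfolding k4_def using summable_on_cmult_right[OF q_summable] by simp
  have "(\<lambda>a. infsum (\<lambda>b. norm (k4 (a, b))) {1..}) = (\<lambda>a. ?q a * infsum ?q {1..})"
    unfolding k4_def by (simp add: infsum_cmult_right')
  then have c2: "(\<lambda>a. norm (infsum (\<lambda>b. norm (k4 (a, b))) {1..})) summable_on {1..}"
    using summable_on_cmult_left[OF q_summable, of "infsum ?q {1..}"] 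
    by (simp add: infsum_nonneg abs_mult)
  have "(\<lambda>x. norm (k4 x)) summable_on Sigma {1..} (\<lambda>_. {1..})"
    using Infinite_Sum.abs_summable_on_Sigma_iff[where f=k4 and A="{1..}" and B="\<lambda>_. {1..}"] c1 c2 by blast
  then show ?thesis by (simp add: abs_summable_summable)
qed

lemma k4_bound:
  assumes "a \<ge> 1" "b \<ge> 1"
  shows "real (a+b) powr (-4) \<le> k4 (a,b)"
proof -
  have ab: "real a ^ 2 * real b ^ 2 \<le> real (a+b) ^ 4"
  proof -
    have "real a ^ 2 \<le> real (a+b) ^ 2" "real b ^ 2 \<le> real (a+b) ^ 2"
      by (simp_all add: power_mono)
    then have "real a ^ 2 * real b ^ 2 \<le> real (a+b) ^ 2 * real (a+b) ^ 2"
      by (intro mult_mono) auto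
    then show ?thesis by (simp flip: power_add)
  qed
  have pos: "real a ^ 2 * real b ^ 2 > 0" using assms by simp
  have "real (a+b) powr (-4) = inverse (real (a+b) ^ 4)"
    using assms by (simp add: powr_minus powr_realpow)
  also have "\<dots> \<le> inverse (real a ^ 2 * real b ^ 2)"
    using ab pos by (intro le_imp_inverse_le) auto
  finally show ?thesis unfolding k4_def by (simp add: mult_inverse_of_nat_commute inverse_mult_distrib)
qed

lemma term_eq:
  fixes t :: real
  assumes "a + b > 0"
  shows "(of_nat a) ^ c * (of_nat (a + b)) powr (- complex_of_real t - of_nat c)
       = complex_of_real ((real a / real (a+b)) ^ c * real (a+b) powr (-t))"
proof -
  have "(of_nat (a + b) :: complex) powr (- complex_of_real t - of_nat c)
     = of_real (real (a+b)) powr of_real (-t - real c)" by simp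
  also have "\<dots> = of_real (real (a+b) powr (-t - real c))"
    by (rule powr_of_real) simp
  finally have 1: "(of_nat (a + b) :: complex) powr (- complex_of_real t - of_nat c) = of_real (real (a+b) powr (-t - real c))" .
  have pr: "real (a+b) powr real c = real (a+b)^c" by (rule powr_realpow) (use assms in \<open>simp only: of_nat_0_less_iff\<close>)
  have "real (a+b) powr (-t - real c) = real (a+b) powr (-t) / real (a+b) ^ c"
    unfolding pr[symmetric] by (simp add: powr_diff)
  then show ?thesis unfolding 1 by (simp add: power_divide)
qed


lemma tail_est:
  fixes d :: "nat \<Rightarrow> complex" and t :: real and n m :: nat
  assumes t: "t \<ge> 4" and n: "n \<ge> 2"
    and zero: "(\<Sum>j\<le>m. d j * dz_series (2*j) (of_real t)) = 0"
    and prev: "\<forall>N\<in>{2..<n}. (\<Sum>a\<in>{1..<N}. \<Sum>j\<le>m. d j * (of_nat a / of_nat N)^(2*j)) = 0"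
  shows "norm (\<Sum>a\<in>{1..<n}. \<Sum>j\<le>m. d j * (of_nat a / of_nat n)^(2*j))
     \<le> (\<Sum>j\<le>m. norm (d j)) * infsum k4 ({1..} \<times> {1..}) * real (n+1) ^ 4 * (real n / real (n+1)) powr t"
proof -
  define A :: "(nat \<times> nat) set" where "A = {1..} \<times> {1..}"
  define G where "G N = (\<Sum>a\<in>{1..<N}. \<Sum>j\<le>m. d j * (of_nat a / of_nat N)^(2*j))" for N :: nat
  define f where "f j = (\<lambda>(a::nat, b::nat). (of_nat a) ^ (2*j) * (of_nat (a + b)) powr (- complex_of_real t - of_nat (2*j)))" for j
  define w where "w x = real (fst x + snd x) powr (-t)" for x :: "nat \<times> nat"
  define D where "D = (\<Sum>j\<le>m. norm (d j))"
  define K where "K = infsum k4 A"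
  have D0: "D \<ge> 0" unfolding D_def by (simp add: sum_nonneg)
  have k4_nn: "k4 x \<ge> 0" for x unfolding k4_def by simp
  have K0: "K \<ge> 0" unfolding K_def using k4_nn by (simp add: infsum_nonneg)
  have k4s: "k4 summable_on A" unfolding A_def by (rule k4_summable)
  have dz: "dz_series (2*j) (of_real t) = infsum (f j) A" for j
    unfolding dz_series_def f_def A_def by simp
  have fval: "f j (a,b) = of_real ((real a / real (a+b)) ^ (2*j) * w (a,b))" if "a + b > 0" for j a b
    unfolding f_def w_def using term_eq[OF that, of "2*j" t] by simp
  have w_le: "w x \<le> k4 x" if xA: "x \<in> A" for x
  proof -
    obtain a b where x: "x = (a,b)" "a \<ge> 1" "b \<ge> 1" using xA unfolding A_def by (cases x) auto
    have "real (a+b) powr (-t) \<le> real (a+b) powr (-4)"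
      using x t by (intro powr_mono) auto
    also have "\<dots> \<le> k4 (a,b)" using k4_bound x by simp
    finally show ?thesis unfolding w_def x by simp
  qed
  have w0: "w x \<ge> 0" for x unfolding w_def by simp
  have nf: "norm (f j x) \<le> w x" if xA: "x \<in> A" for j x
  proof -
    obtain a b where x: "x = (a,b)" "a \<ge> 1" "b \<ge> 1" using xA unfolding A_def by (cases x) auto
    have r: "(real a / real (a+b)) ^ (2*j) \<le> 1" using x(2) by (intro power_le_one) (auto simp: divide_le_eq)
    have "norm (f j x) = (real a / real (a+b)) ^ (2*j) * w (a,b)"
    proof -
      have "f j x = of_real ((real a / real (a+b)) ^ (2*j) * w (a,b))" using x fval[of a b j] by simp
      then have "norm (f j x) = \<bar>(real a / real (a+b)) ^ (2*j) * w (a,b)\<bar>" by (simp only: norm_of_real)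
      then show ?thesis using w0[of "(a,b)"] by simp
    qed
    also have "\<dots> \<le> w (a,b)" using r w0[of "(a,b)"] by (simp add: mult_left_le_one_le)
    finally show ?thesis using x by simp
  qed
  have fs: "f j summable_on A" for j
  proof -
    have "(\<lambda>x. norm (f j x)) summable_on A"
      by (rule Infinite_Sum.abs_summable_on_comparison_test[where g=k4]) 
         (use k4s k4_nn in \<open>auto intro: order_trans[OF nf w_le]\<close>)
    then show ?thesis by (rule Infinite_Sum.abs_summable_summable)
  qed
  define g where "g x = (\<Sum>j\<le>m. d j * f j x)" for x
  have gsum: "g summable_on A \<and> infsum g A = (\<Sum>j\<le>m. infsum (\<lambda>x. d j * f j x) A)"
    unfolding g_def by (rule infsum_finsum) (intro summable_on_cmult_right fs)
  have ginf: "infsum g A = 0"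
    using gsum zero by (simp add: infsum_cmult_right' dz)
  have ng: "norm (g x) \<le> D * w x" if "x \<in> A" for x
  proof -
    have "norm (g x) \<le> (\<Sum>j\<le>m. norm (d j * f j x))" unfolding g_def by (rule norm_sum)
    also have "\<dots> \<le> (\<Sum>j\<le>m. norm (d j) * w x)"
      by (intro sum_mono) (simp add: norm_mult mult_left_mono nf[OF that])
    finally show ?thesis unfolding D_def by (simp add: sum_distrib_right)
  qed
  define E where "E = {x\<in>A. fst x + snd x \<le> n}"
  have Efin: "finite E"
    by (rule finite_subset[of _ "{..n} \<times> {..n}"]) (auto simp: E_def)
  have AE: "A = E \<union> (A - E)" "E \<inter> (A - E) = {}" unfolding E_def by auto
  have gsA: "g summable_on A" using gsum by simp
  have gsAE: "g summable_on (A - E)" by (rule summable_on_subset[OF gsA]) auto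
  have split: "infsum g A = sum g E + infsum g (A - E)"
    using infsum_Un_disjoint[OF summable_on_finite[OF Efin] gsAE AE(2)] AE(1) Efin by simp
  have Eimg: "E = (\<lambda>(N,a). (a, N - a)) ` (SIGMA N:{2..n}. {1..<N})"
  proof (intro equalityI subsetI)
    fix x assume "x \<in> E"
    then obtain a b where x: "x = (a,b)" "a \<ge> 1" "b \<ge> 1" "a + b \<le> n" unfolding E_def A_def by auto
    then have "(a+b, a) \<in> (SIGMA N:{2..n}. {1..<N})" by auto
    moreover have "x = (\<lambda>(N,a). (a, N - a)) (a+b, a)" using x by simp
    ultimately show "x \<in> (\<lambda>(N,a). (a, N - a)) ` (SIGMA N:{2..n}. {1..<N})" by blast
  next
    fix x assume "x \<in> (\<lambda>(N,a). (a, N - a)) ` (SIGMA N:{2..n}. {1..<N})"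
    then show "x \<in> E" unfolding E_def A_def by auto
  qed
  have inj: "inj_on (\<lambda>(N,a). (a, N - a)) (SIGMA N:{2..n}. {1..<N})"
    by (auto simp: inj_on_def)
  have inner: "(\<Sum>a\<in>{1..<N}. g (a, N - a)) = G N * of_real (real N powr (-t))" if "N \<ge> 2" for N
  proof -
    have "g (a, N - a) = (\<Sum>j\<le>m. d j * (of_nat a / of_nat N)^(2*j)) * of_real (real N powr (-t))"
      if a: "a \<in> {1..<N}" for a
    proof -
      have aN: "a + (N - a) = N" using a by simp
      have "f j (a, N - a) = (of_nat a / of_nat N)^(2*j) * of_real (real N powr (-t))" for j
        using fval[of a "N-a" j] a unfolding aN w_def by simp
      then show ?thesis unfolding g_def by (simp add: sum_distrib_right mult.assoc)
    qed
    then show ?thesis unfolding G_def sum_distrib_right by (intro sum.cong) auto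
  qed
  have "sum g E = (\<Sum>N\<in>{2..n}. \<Sum>a\<in>{1..<N}. g (a, N - a))"
    unfolding Eimg sum.reindex[OF inj] by (simp add: sum.Sigma case_prod_beta)
  also have "\<dots> = (\<Sum>N\<in>{2..n}. G N * of_real (real N powr (-t)))"
    by (rule sum.cong[OF refl], rule inner) auto
  also have "\<dots> = G n * of_real (real n powr (-t))"
  proof -
    have "{2..n} = insert n {2..<n}" using n by auto
    moreover have "(\<Sum>N\<in>{2..<n}. G N * of_real (real N powr (-t))) = 0"
      using prev unfolding G_def by (intro sum.neutral) auto
    ultimately show ?thesis by simp
  qed
  finally have fin: "sum g E = G n * of_real (real n powr (-t))" .
  define c where "c = D * real (n+1) powr (4 - t)"
  have c0: "c \<ge> 0" unfolding c_def using D0 by simp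
  have k4sAE: "k4 summable_on (A - E)" by (rule summable_on_subset[OF k4s]) auto
  have tail: "norm (infsum g (A - E)) \<le> c * infsum k4 (A - E)"
  proof (rule norm_infsum_le)
    show "(g has_sum infsum g (A - E)) (A - E)" using gsAE by simp
    show "((\<lambda>x. c * k4 x) has_sum (c * infsum k4 (A - E))) (A - E)"
      using k4sAE by (intro has_sum_cmult_right) simp
    fix x assume x: "x \<in> A - E"
    then obtain a b where xab: "x = (a,b)" "a \<ge> 1" "b \<ge> 1" "a + b > n" unfolding E_def A_def by auto
    have "w x = real (a+b) powr (4 - t) * real (a+b) powr (-4)"
      unfolding w_def xab by (simp flip: powr_add)
    also have "\<dots> \<le> real (n+1) powr (4 - t) * k4 x"
    proof (intro mult_mono)
      show "real (a+b) powr (4 - t) \<le> real (n+1) powr (4 - t)"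
        using xab t by (intro powr_mono2') auto
      show "real (a+b) powr (-4) \<le> k4 x" using k4_bound xab by simp
    qed (auto simp: k4_nn)
    finally have "w x \<le> real (n+1) powr (4 - t) * k4 x" .
    then have "D * w x \<le> c * k4 x" unfolding c_def using D0 by (simp add: mult_left_mono mult.assoc)
    then show "norm (g x) \<le> c * k4 x" using ng[of x] x by simp
  qed
  have "infsum k4 (A - E) \<le> K"
    unfolding K_def by (rule infsum_mono_neutral[OF k4sAE k4s]) (auto simp: k4_nn)
  then have tail2: "norm (infsum g (A - E)) \<le> c * K" using tail c0 by (meson mult_left_mono order_trans)
  have "G n * of_real (real n powr (-t)) = - infsum g (A - E)"
    using split ginf fin by (simp add: eq_neg_iff_add_eq_0 add.commute)
  then have "norm (G n * of_real (real n powr (-t))) = norm (infsum g (A - E))" by simp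
  then have "norm (G n) * real n powr (-t) \<le> c * K"
    using tail2 by (simp add: norm_mult)
  then have "norm (G n) \<le> c * K * real n powr t"
    using n by (simp add: powr_minus field_simps)
  also have "c * K * real n powr t = D * K * real (n+1) ^ 4 * (real n / real (n+1)) powr t"
  proof -
    have e1: "real (n+1) powr (4 - t) = real (n+1) ^ 4 / real (n+1) powr t"
      by (simp add: powr_diff powr_realpow)
    have e2: "(real n / real (n+1)) powr t = real n powr t / real (n+1) powr t"
      by (simp add: powr_divide)
    show ?thesis unfolding c_def e1 e2 by simp
  qed
  finally show ?thesis unfolding G_def D_def K_def A_def .
qed


theorem corollary5p3:
  fixes m :: nat and F :: "nat \<Rightarrow> complex \<Rightarrow> complex"
    and coef coef' :: "nat \<Rightarrow> complex"
  assumes "\<And>k. k \<le> 2*m+1 \<Longrightarrow> is_dz_continuation k (F k)"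
    and "\<forall>\<^sub>F s in cosparse UNIV. dz_comb m coef F s = 0"
    and "\<forall>\<^sub>F s in cosparse UNIV. dz_comb m coef' F s = 0"
  shows "\<forall>j\<le>m. coef (2*j) = coef' (2*j)"
proof -
  define d where "d j = (if j = 0 then (coef 0 - coef' 0)/2 else coef (2*j) - coef' (2*j))" for j
  define G where "G N = (\<Sum>a\<in>{1..<N}. \<Sum>j\<le>m. d j * (of_nat a / of_nat N)^(2*j))" for N :: nat
  define P where "P s = (dz_comb m coef F s = 0 \<and> dz_comb m coef' F s = 0)" for s
  have "\<forall>\<^sub>F s in cosparse UNIV. P s"
    unfolding P_def using assms(2,3) by (rule eventually_conj)
  then have sp: "{s. \<not> P s} sparse_in UNIV" by (simp add: eventually_cosparse)
  have comb: "(\<Sum>j\<le>m. d j * dz_series (2*j) s) = 0" if s: "Re s > 2" "P s" for s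
  proof -
    have Fk: "F k s = dz_series k s" if "k \<le> 2*m+1" for k
      using assms(1)[OF that] s(1) unfolding is_dz_continuation_def by blast
    have "0 = dz_comb m coef F s - dz_comb m coef' F s" using s(2) unfolding P_def by simp
    also have "\<dots> = (\<Sum>j=1..m. (coef (2*j) - coef' (2*j)) * F (2*j) s) + (coef 0 - coef' 0) * F 0 s / 2"
    proof -
      have e0: "dz_comb m coef F s - dz_comb m coef' F s =
         ((\<Sum>j=1..m. coef (2*j) * F (2*j) s) - (\<Sum>j=1..m. coef' (2*j) * F (2*j) s))
         + (coef 0 * F 0 s / 2 - coef' 0 * F 0 s / 2)"
        unfolding dz_comb_def by (simp add: algebra_simps)
      have e1: "(\<Sum>j=1..m. coef (2*j) * F (2*j) s) - (\<Sum>j=1..m. coef' (2*j) * F (2*j) s)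
          = (\<Sum>j=1..m. (coef (2*j) - coef' (2*j)) * F (2*j) s)"
        by (simp add: sum_subtractf left_diff_distrib)
      have e2: "coef 0 * F 0 s / 2 - coef' 0 * F 0 s / 2 = (coef 0 - coef' 0) * F 0 s / 2"
        by (simp add: left_diff_distrib diff_divide_distrib)
      show ?thesis unfolding e0 e1 e2 ..
    qed
    also have "\<dots> = (\<Sum>j\<le>m. d j * F (2*j) s)"
      unfolding sum_head0 d_def by (simp add: field_simps)
    also have "\<dots> = (\<Sum>j\<le>m. d j * dz_series (2*j) s)"
      by (intro sum.cong refl) (simp add: Fk)
    finally show ?thesis by simp
  qed
  have ex_t: "\<exists>t. real k \<le> t \<and> t \<le> real k + 1 \<and> (\<Sum>j\<le>m. d j * dz_series (2*j) (of_real t)) = 0"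
    if k: "k \<ge> 4" for k :: nat
  proof -
    define S where "S = complex_of_real ` {real k..real k + 1}"
    have "compact S" unfolding S_def
      by (intro compact_continuous_image continuous_intros) simp
    then have fin: "finite (S \<inter> {s. \<not> P s})" using sp by (intro sparse_in_compact_finite) (auto intro: sparse_in_subset[OF sp])
    have "infinite S" unfolding S_def
    proof
      assume "finite (complex_of_real ` {real k..real k + 1})"
      moreover have "inj_on complex_of_real {real k..real k + 1}" by (auto simp: inj_on_def)
      ultimately have "finite {real k..real k + 1}" using finite_imageD by blast
      then show False using infinite_Icc[of "real k" "real k + 1"] by simp
    qed
    then have "S - (S \<inter> {s. \<not> P s}) \<noteq> {}" using fin
      by (metis finite_Diff2 finite.emptyI)
    then obtain s where sS: "s \<in> S" and Ps: "P s" by auto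
    then obtain t where t: "t \<in> {real k..real k + 1}" "s = of_real t" unfolding S_def by auto
    have "Re s > 2" using t k by simp
    then show ?thesis using comb[OF _ Ps] t by auto
  qed
  have Gz: "N \<ge> 2 \<longrightarrow> G N = 0" for N
  proof (induction N rule: less_induct)
    case (less N)
    show ?case
    proof
      assume N: "N \<ge> 2"
      have prev: "\<forall>N'\<in>{2..<N}. G N' = 0" using less.IH by auto
      define C where "C = (\<Sum>j\<le>m. norm (d j)) * infsum k4 ({1..} \<times> {1..}) * real (N+1) ^ 4"
      define q where "q = real N / real (N+1)"
      have q0: "0 \<le> q" "q < 1" unfolding q_def by auto
      have C0: "C \<ge> 0" unfolding C_def
        by (intro mult_nonneg_nonneg sum_nonneg infsum_nonneg) (auto simp: k4_def)
      have bound: "norm (G N) \<le> C * q ^ k" if k: "k \<ge> 4" for k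
      proof -
        obtain t where t: "real k \<le> t" "t \<le> real k + 1" and z: "(\<Sum>j\<le>m. d j * dz_series (2*j) (of_real t)) = 0"
          using ex_t[OF k] by blast
        have "norm (G N) \<le> C * q powr t"
          using tail_est[where d=d and t=t and n=N and m=m, OF _ N z] prev t k unfolding G_def C_def q_def by force
        also have "q powr t \<le> q powr real k"
          using q0 t by (intro powr_mono') auto
        also have "q powr real k = q ^ k"
          using q0 N unfolding q_def by (simp add: powr_realpow)
        finally show ?thesis using C0 by (simp add: mult_left_mono)
      qed
      have lim: "(\<lambda>k. C * q ^ k) \<longlonglongrightarrow> 0"
        using q0 by (intro tendsto_mult_right_zero LIMSEQ_power_zero) auto
      have "norm (G N) \<le> 0"
        by (rule LIMSEQ_le_const[OF lim]) (use bound in auto)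
      then show "G N = 0" by simp
    qed
  qed
  have "\<forall>j\<le>m. d j = 0"
    by (rule Gzero) (use Gz in \<open>simp add: G_def\<close>)
  then show ?thesis
  proof (intro allI impI)
    fix j assume dz: "\<forall>j\<le>m. d j = 0" and j: "j \<le> m"
    have "d j = 0" using dz j by blast
    then show "coef (2*j) = coef' (2*j)"
      unfolding d_def by (cases "j = 0") auto
  qed
qed

end
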